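(* Let $T>0$, $\sigma>0$, $\lambda>0$, $\kappa>0$, let the cost function be $g(z)=\kappa z$, and let $H^1\in\mathcal{C}^2_b(\mathbb{R})$, $H^1\ne0$. For each $N\ge1$ consider the $N$-player risk-neutral game with claims $H^1$ for player 1 and $H^i=0$ for $i=2,\dots,N$, and let $(v^{1,N},\dots,v^{N,N})$ be the classical solution of $$0=v^j_t+\tfrac12\sigma^2v^j_{pp}+\lambda\dot X^*\,v^j_p-\kappa\,\dot X^j\,\dot X^*,\qquad v^j(T,p)=H^j(p),\quad j=1,\dots,N,$$ with equilibrium trading speeds $\dot X^j=\frac{\lambda}{\kappa}\Big(v^j_p-\frac{1}{N+1}\sum_{i=1}^Nv^i_p\Big)$ and aggregate speed $\sum_{i=1}^N\dot X^i=\frac{\lambda}{\kappa(N+1)}\sum_{i=1}^Nv^i_p$. Then the aggregate equilibrium trading speed satisfies $\lim_{N\to\infty}\sum_{i=1}^N\dot X^i_t=0$.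
   Context: Setting: players $j=1,\dots,N$ hold cash-settled claims $H^j(P_T)$ on a stock with price $dP_t=\sigma dB_t+\lambda\sum_i\dot X^i_t dt$, where $X^i$ is player $i$'s (absolutely continuous) holding with $X^i_0=0$, and player $j$ maximizes $\mathbb{E}[-\int_0^T\dot X^j_t\,g(\sum_i\dot X^i_t)dt+H^j(P_T)]$. The functions $v^j$ are the players' value functions and the formulas give the Nash equilibrium feedback trading speeds (functions of time and spot price). $\mathcal{C}^2_b$ denotes functions bounded together with derivatives up to order 2. *)

theory Defs
  imports "HOL-Analysis.Analysis"
begin

definition indiv_speed :: "real \<Rightarrow> real \<Rightarrow> nat \<Rightarrow> (nat \<Rightarrow> real \<Rightarrow> real \<Rightarrow> real) \<Rightarrow> nat \<Rightarrow> real \<Rightarrow> real \<Rightarrow> real" where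
  "indiv_speed lam kap N vpN j t p =
     lam / kap * (vpN j t p - (1 / (real N + 1)) * (\<Sum>i\<in>{1..N}. vpN i t p))"

definition aggr_speed :: "real \<Rightarrow> real \<Rightarrow> nat \<Rightarrow> (nat \<Rightarrow> real \<Rightarrow> real \<Rightarrow> real) \<Rightarrow> real \<Rightarrow> real \<Rightarrow> real" where
  "aggr_speed lam kap N vpN t p = lam / (kap * (real N + 1)) * (\<Sum>i\<in>{1..N}. vpN i t p)"

definition classical_solution ::
  "real \<Rightarrow> real \<Rightarrow> real \<Rightarrow> real \<Rightarrow> nat \<Rightarrow> (nat \<Rightarrow> real \<Rightarrow> real) \<Rightarrow>
   (nat \<Rightarrow> real \<Rightarrow> real \<Rightarrow> real) \<Rightarrow> (nat \<Rightarrow> real \<Rightarrow> real \<Rightarrow> real) \<Rightarrow>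
   (nat \<Rightarrow> real \<Rightarrow> real \<Rightarrow> real) \<Rightarrow> (nat \<Rightarrow> real \<Rightarrow> real \<Rightarrow> real) \<Rightarrow> bool" where
  "classical_solution T sig lam kap N H v vt vp vpp \<longleftrightarrow>
    (\<forall>j\<in>{1..N}.
      (\<forall>t\<in>{0..<T}. \<forall>p. ((\<lambda>s. v j s p) has_real_derivative vt j t p) (at t within {0..T})) \<and>
      (\<forall>t\<in>{0..T}. \<forall>p. (v j t has_real_derivative vp j t p) (at p)) \<and>
      (\<forall>t\<in>{0..T}. \<forall>p. (vp j t has_real_derivative vpp j t p) (at p)) \<and>
      continuous_on ({0..T} \<times> UNIV) (\<lambda>(t,p). v j t p) \<and>
      continuous_on ({0..T} \<times> UNIV) (\<lambda>(t,p). vp j t p) \<and>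
      continuous_on ({0..T} \<times> UNIV) (\<lambda>(t,p). vpp j t p) \<and>
      continuous_on ({0..<T} \<times> UNIV) (\<lambda>(t,p). vt j t p) \<and>
      (\<exists>B. \<forall>t\<in>{0..T}. \<forall>p. \<bar>v j t p\<bar> \<le> B \<and> \<bar>vp j t p\<bar> \<le> B \<and> \<bar>vpp j t p\<bar> \<le> B) \<and>
      (\<forall>p. v j T p = H j p) \<and>
      (\<forall>t\<in>{0..<T}. \<forall>p.
         0 = vt j t p + sig^2 / 2 * vpp j t p
             + lam * aggr_speed lam kap N vp t p * vp j t p
             - kap * indiv_speed lam kap N vp j t p * aggr_speed lam kap N vp t p))"

definition C2b :: "(real \<Rightarrow> real) \<Rightarrow> bool" where
  "C2b H \<longleftrightarrow> (\<exists>H' H''. (\<forall>p. (H has_real_derivative H' p) (at p)) \<and>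
      (\<forall>p. (H' has_real_derivative H'' p) (at p)) \<and> continuous_on UNIV H'' \<and>
      (\<exists>B. \<forall>p. \<bar>H p\<bar> \<le> B \<and> \<bar>H' p\<bar> \<le> B \<and> \<bar>H'' p\<bar> \<le> B))"

end

theory Submission
  imports Defs
begin


lemma absle: "\<bar>p::real\<bar> \<le> 1 + p^2"
proof (cases "\<bar>p\<bar> \<le> 1")
  case True thus ?thesis by (smt (verit) zero_le_power2)
next
  case False
  hence "\<bar>p\<bar>*1 \<le> \<bar>p\<bar>*\<bar>p\<bar>" by (intro mult_left_mono) auto
  also have "\<dots> = p^2" by (simp add: power2_eq_square)
  finally show ?thesis by simp
qed

lemma max_principle:
  fixes T a \<beta> B M :: real and D Dt Dp Dpp b :: "real \<Rightarrow> real \<Rightarrow> real"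
  assumes T: "T > 0" and a: "a \<ge> 0"
    and cont: "continuous_on ({0..T} \<times> UNIV) (\<lambda>(t,p). D t p)"
    and bnd: "\<forall>t\<in>{0..T}. \<forall>p. D t p \<le> B"
    and dt: "\<forall>t\<in>{0..<T}. \<forall>p. ((\<lambda>s. D s p) has_real_derivative Dt t p) (at t within {0..T})"
    and dp: "\<forall>t\<in>{0..<T}. \<forall>p. (D t has_real_derivative Dp t p) (at p)"
    and dpp: "\<forall>t\<in>{0..<T}. \<forall>p. (Dp t has_real_derivative Dpp t p) (at p)"
    and eq: "\<forall>t\<in>{0..<T}. \<forall>p. Dt t p + a * Dpp t p + b t p * Dp t p = 0"
    and bb: "\<forall>t\<in>{0..<T}. \<forall>p. \<bar>b t p\<bar> \<le> \<beta>"
    and termc: "\<forall>p. D T p \<le> M"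
  shows "\<forall>t\<in>{0..T}. \<forall>p. D t p \<le> M"
proof (intro ballI allI, rule ccontr)
  fix t1 p1 assume t1: "t1 \<in> {0..T}" and nle: "\<not> D t1 p1 \<le> M"
  define \<delta> where "\<delta> = D t1 p1 - M"
  have \<delta>: "\<delta> > 0" using nle \<delta>_def by simp
  have \<beta>: "\<beta> \<ge> 0" using bb T by (metis abs_ge_zero atLeastLessThan_iff order.refl order_trans)
  define K where "K = 2*a + \<beta> + 1"
  have K: "K > 0" using a \<beta> K_def by simp
  define \<epsilon> where "\<epsilon> = \<delta> / (4*exp(K*T)*(1+p1^2))"
  have \<epsilon>: "\<epsilon> > 0" unfolding \<epsilon>_def using \<delta> by (simp add: add_pos_nonneg)
  define \<psi> where "\<psi> t p = \<epsilon>*exp(K*(T-t))*(1+p^2)" for t p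
  define Z where "Z t p = D t p - M - \<psi> t p" for t p
  have "exp (K*(T-t1)) \<le> exp (K*T)" using K t1 by (simp add: mult_left_mono)
  hence "\<psi> t1 p1 \<le> \<epsilon>*exp(K*T)*(1+p1^2)" unfolding \<psi>_def using \<epsilon>
    by (simp add: mult_right_mono add_pos_nonneg)
  also have "\<dots> = \<delta>/4" proof -
    have X: "exp(K*T)*(1+p1^2) > 0" by (simp add: add_pos_nonneg)
    have "\<epsilon>*exp(K*T)*(1+p1^2) = \<delta> / (4*(exp(K*T)*(1+p1^2))) * (exp(K*T)*(1+p1^2))"
      unfolding \<epsilon>_def by (simp add: mult.assoc)
    also have "\<dots> = \<delta>/4" using X by (metis divide_divide_eq_left nonzero_mult_div_cancel_right divide_self_if
       less_irrefl times_divide_eq_left mult.commute)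
    finally show ?thesis .
  qed
  finally have Zt1: "Z t1 p1 > 0" unfolding Z_def \<delta>_def using \<delta> \<delta>_def by simp
  define R where "R = \<bar>p1\<bar> + (\<bar>B\<bar>+\<bar>M\<bar>+1)/\<epsilon> + 1"
  have far: "Z t p < 0" if "t \<in> {0..T}" "\<bar>p\<bar> > R" for t p
  proof -
    have "exp (K*(T-t)) \<ge> 1" using K that(1) by simp
    hence "\<psi> t p \<ge> \<epsilon>*(1+p^2)" unfolding \<psi>_def using \<epsilon>
      by (simp add: add_pos_nonneg mult_left_mono)
    moreover have "1+p^2 \<ge> \<bar>p\<bar>" by (rule absle)
    moreover have "\<bar>p\<bar> > (\<bar>B\<bar>+\<bar>M\<bar>+1)/\<epsilon>" using that(2) R_def abs_ge_zero[of p1] by linarith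
    hence "\<epsilon>*\<bar>p\<bar> > \<bar>B\<bar>+\<bar>M\<bar>+1" using \<epsilon> by (simp add: pos_divide_less_eq mult.commute)
    ultimately have "\<psi> t p > \<bar>B\<bar>+\<bar>M\<bar>+1"
      by (smt (verit) \<epsilon> mult_left_mono)
    moreover have "D t p \<le> B" using bnd that(1) by blast
    ultimately show ?thesis unfolding Z_def by simp
  qed
  define C where "C = {0..T} \<times> {-R..R}"
  have contZ: "continuous_on C (\<lambda>x. Z (fst x) (snd x))"
  proof -
    have "continuous_on C (\<lambda>(t,p). D t p)"
      by (rule continuous_on_subset[OF cont]) (auto simp: C_def)
    hence c1: "continuous_on C (\<lambda>x. D (fst x) (snd x))" by (simp add: case_prod_beta')
    have c2: "continuous_on C (\<lambda>x. \<psi> (fst x) (snd x))" unfolding \<psi>_def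
      by (intro continuous_intros)
    show ?thesis unfolding Z_def using c1 c2 by (intro continuous_intros)
  qed
  have p1R: "\<bar>p1\<bar> \<le> R" using R_def \<epsilon> by (simp add: add_pos_nonneg)
  have "(t1,p1) \<in> C" using t1 p1R unfolding C_def by auto
  hence "C \<noteq> {}" by blast
  then obtain x0 where x0: "x0 \<in> C" and mx: "\<forall>y\<in>C. Z (fst y) (snd y) \<le> Z (fst x0) (snd x0)"
    using continuous_attains_sup[OF _ _ contZ] unfolding C_def by (auto simp: compact_Times)
  define t0 where "t0 = fst x0"
  define p0 where "p0 = snd x0"
  have t0: "t0 \<in> {0..T}" using x0 unfolding C_def t0_def by auto
  have Zmax1: "Z t1 p1 \<le> Z t0 p0" using mx t1 p1R unfolding C_def t0_def p0_def by force
  have gmax: "Z t p \<le> Z t0 p0" if "t \<in> {0..T}" for t p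
  proof (cases "\<bar>p\<bar> \<le> R")
    case True then show ?thesis using mx that unfolding C_def t0_def p0_def by force
  next
    case False then show ?thesis using far[OF that, of p] Zt1 Zmax1 by linarith
  qed
  have Z0pos: "Z t0 p0 > 0" using Zt1 Zmax1 by simp
  have "t0 \<noteq> T"
  proof
    assume "t0 = T"
    hence "Z t0 p0 = D T p0 - M - \<psi> T p0" unfolding Z_def by simp
    moreover have "\<psi> T p0 > 0" unfolding \<psi>_def using \<epsilon> by (simp add: add_pos_nonneg)
    ultimately show False using termc Z0pos by (smt (verit))
  qed
  hence t0': "t0 \<in> {0..<T}" using t0 by simp
  define E0 where "E0 = exp (K*(T-t0))"
  define w where "w = \<epsilon>*E0"
  have w: "w > 0" unfolding w_def E0_def using \<epsilon> by simp
  have g1: "(Z t0 has_real_derivative (Dp t0 p - w*(2*p))) (at p)" for p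
  proof -
    have "((\<lambda>p. D t0 p - M - w*(1+p^2)) has_real_derivative (Dp t0 p - w*(2*p))) (at p)"
      using dp t0' by (auto intro!: derivative_eq_intros)
    moreover have "(\<lambda>p. D t0 p - M - w*(1+p^2)) = Z t0"
      unfolding Z_def \<psi>_def w_def E0_def by (auto simp: mult.assoc)
    ultimately show ?thesis by simp
  qed
  have g2: "((\<lambda>p. Dp t0 p - w*(2*p)) has_real_derivative (Dpp t0 p - w*2)) (at p)" for p
    using dpp t0' by (auto intro!: derivative_eq_intros)
  have gm: "\<forall>y. \<bar>p0 - y\<bar> < 1 \<longrightarrow> Z t0 y \<le> Z t0 p0" using gmax t0 by blast
  have Dp0: "Dp t0 p0 - w*(2*p0) = 0" by (rule DERIV_local_max[OF g1 _ gm]) simp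
  have Dpp0: "Dpp t0 p0 - w*2 \<le> 0"
  proof (rule ccontr)
    assume "\<not> ?thesis"
    hence pos2: "0 < Dpp t0 p0 - w*2" by simp
    have "\<exists>d>0. \<forall>h>0. h < d \<longrightarrow> Dp t0 p0 - w*(2*p0) < Dp t0 (p0+h) - w*(2*(p0+h))"
      using DERIV_pos_inc_right[OF g2 pos2] .
    then obtain d where d: "d > 0" "\<forall>h>0. h < d \<longrightarrow> Dp t0 p0 - w*(2*p0) < Dp t0 (p0+h) - w*(2*(p0+h))"
      by blast
    have dd: "p0 < p0 + d/2" using d(1) by simp
    have "\<exists>z>p0. z < p0 + d/2 \<and> Z t0 (p0+d/2) - Z t0 p0 = (p0 + d/2 - p0) * (Dp t0 z - w*(2*z))"
      by (rule MVT2[OF dd g1])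
    then obtain z where z: "z > p0" "z < p0 + d/2" "Z t0 (p0+d/2) - Z t0 p0 = (d/2) * (Dp t0 z - w*(2*z))"
      by auto
    have "z - p0 > 0" "z - p0 < d" using z d(1) by auto
    hence "Dp t0 p0 - w*(2*p0) < Dp t0 (p0 + (z-p0)) - w*(2*(p0 + (z-p0)))" using d(2) by blast
    hence "Dp t0 z - w*(2*z) > 0" using Dp0 by simp
    hence "(d/2) * (Dp t0 z - w*(2*z)) > 0" using d(1) by simp
    hence "Z t0 (p0+d/2) > Z t0 p0" using z(3) by linarith
    moreover have "Z t0 (p0+d/2) \<le> Z t0 p0" using gmax t0 by blast
    ultimately show False by linarith
  qed
  have ht: "((\<lambda>s. Z s p0) has_real_derivative (Dt t0 p0 + K*w*(1+p0^2))) (at t0 within {0..T})"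
  proof -
    have "((\<lambda>s. D s p0 - M - \<epsilon>*exp(K*(T-s))*(1+p0^2)) has_real_derivative
            (Dt t0 p0 - 0 - \<epsilon>*(exp(K*(T-t0)) * (K*(0-1)))*(1+p0^2))) (at t0 within {0..T})"
      using dt t0' by (auto intro!: derivative_eq_intros)
    thus ?thesis unfolding Z_def \<psi>_def w_def E0_def by (simp add: algebra_simps)
  qed
  have Dt0: "Dt t0 p0 + K*w*(1+p0^2) \<le> 0"
  proof (rule ccontr)
    assume "\<not> ?thesis"
    hence pos: "0 < Dt t0 p0 + K*w*(1+p0^2)" by simp
    have "\<forall>\<^sub>F y in at t0 within {0..T}. 0 < (Z y p0 - Z t0 p0)/(y - t0)"
      using order_tendstoD(1)[OF ht[unfolded has_field_derivative_iff] pos] .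
    then obtain d where d: "d > 0" "\<forall>y\<in>{0..T}. y \<noteq> t0 \<and> dist y t0 < d \<longrightarrow> 0 < (Z y p0 - Z t0 p0)/(y - t0)"
      unfolding eventually_at by blast
    define y where "y = min (t0 + d/2) T"
    have y: "y \<in> {0..T}" "y > t0" "dist y t0 < d" using t0' d(1) unfolding y_def dist_real_def by auto
    hence "0 < (Z y p0 - Z t0 p0)/(y - t0)" using d(2) by auto
    hence "Z y p0 > Z t0 p0" using y(2) by (simp add: zero_less_divide_iff)
    thus False using gmax[OF y(1), of p0] by simp
  qed
  have E: "Dt t0 p0 + a * Dpp t0 p0 + b t0 p0 * Dp t0 p0 = 0" using eq t0' by blast
  have bp: "b t0 p0 * p0 * 2 \<le> \<beta> * (1 + p0^2)"
  proof -
    have "b t0 p0 * p0 \<le> \<bar>b t0 p0 * p0\<bar>" by simp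
    also have "\<dots> = \<bar>b t0 p0\<bar> * \<bar>p0\<bar>" by (simp add: abs_mult)
    also have "\<dots> \<le> \<beta> * \<bar>p0\<bar>" using bb t0' by (intro mult_right_mono) auto
    finally have "b t0 p0 * p0 * 2 \<le> \<beta> * (2*\<bar>p0\<bar>)" by simp
    also have "2*\<bar>p0\<bar> \<le> 1 + p0^2"
    proof -
      have "0 \<le> (\<bar>p0\<bar> - 1)^2" by simp
      also have "\<dots> = p0^2 - 2*\<bar>p0\<bar> + 1" by (simp add: power2_eq_square algebra_simps)
      finally show ?thesis by simp
    qed
    hence "\<beta> * (2*\<bar>p0\<bar>) \<le> \<beta> * (1 + p0^2)" using \<beta> by (rule mult_left_mono)
    finally show ?thesis .
  qed
  have i1: "Dt t0 p0 \<le> - K*w*(1+p0^2)" using Dt0 by simp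
  have i2: "a * Dpp t0 p0 \<le> a*(w*2)" using Dpp0 a by (intro mult_left_mono) auto
  have i3: "b t0 p0 * Dp t0 p0 \<le> w * (\<beta> * (1 + p0^2))"
  proof -
    have "b t0 p0 * Dp t0 p0 = w * (b t0 p0 * p0 * 2)" using Dp0 by (simp add: algebra_simps)
    also have "\<dots> \<le> w * (\<beta> * (1 + p0^2))" using bp w by (intro mult_left_mono) auto
    finally show ?thesis .
  qed
  have "0 \<le> - K*w*(1+p0^2) + a*(w*2) + w * (\<beta> * (1 + p0^2))" using E i1 i2 i3 by linarith
  also have "\<dots> = w * (-(2*a+1)*(1+p0^2) + 2*a)" unfolding K_def by (simp add: algebra_simps)
  also have "\<dots> \<le> w * (-(2*a+1) + 2*a)"
  proof -
    have "(2*a+1)*(1+p0^2) \<ge> (2*a+1)*1" using a by (intro mult_left_mono) auto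
    hence "2*a+1 \<le> (2*a+1)*(1+p0^2)" by (simp only: mult_1_right)
    moreover have "-(2*a+1)*(1+p0^2) = -((2*a+1)*(1+p0^2))" by (simp only: minus_mult_left)
    ultimately have "-(2*a+1)*(1+p0^2) + 2*a \<le> -(2*a+1) + 2*a" by linarith
    thus ?thesis using w by (intro mult_left_mono) auto
  qed
  also have "\<dots> < 0" using w by simp
  finally show False by simp
qed


lemma grad_bound:
  fixes T a c B L :: real and S St Sp Spp :: "real \<Rightarrow> real \<Rightarrow> real"
  assumes T: "T > 0" and a: "a \<ge> 0"
    and cont: "continuous_on ({0..T} \<times> UNIV) (\<lambda>(t,p). S t p)"
    and bnd: "\<forall>t\<in>{0..T}. \<forall>p. \<bar>S t p\<bar> \<le> B \<and> \<bar>Sp t p\<bar> \<le> B"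
    and dt: "\<forall>t\<in>{0..<T}. \<forall>p. ((\<lambda>s. S s p) has_real_derivative St t p) (at t within {0..T})"
    and dp: "\<forall>t\<in>{0..T}. \<forall>p. (S t has_real_derivative Sp t p) (at p)"
    and dpp: "\<forall>t\<in>{0..<T}. \<forall>p. (Sp t has_real_derivative Spp t p) (at p)"
    and eq: "\<forall>t\<in>{0..<T}. \<forall>p. St t p + a * Spp t p + c * (Sp t p)^2 = 0"
    and termc: "\<forall>x y. \<bar>S T x - S T y\<bar> \<le> L * \<bar>x - y\<bar>"
  shows "\<forall>t\<in>{0..T}. \<forall>p. \<bar>Sp t p\<bar> \<le> L"
proof -
  have lip: "\<bar>S t (p+h) - S t p\<bar> \<le> L * \<bar>h\<bar>" if t: "t \<in> {0..T}" for t p h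
  proof -
    define b where "b t p = c * (Sp t (p+h) + Sp t p)" for t p
    have bb: "\<forall>t\<in>{0..<T}. \<forall>p. \<bar>b t p\<bar> \<le> \<bar>c\<bar> * (2*B)"
    proof (intro ballI allI)
      fix t p assume "t \<in> {0..<T}"
      hence "\<bar>Sp t (p+h)\<bar> \<le> B" "\<bar>Sp t p\<bar> \<le> B" using bnd by auto
      hence "\<bar>Sp t (p+h) + Sp t p\<bar> \<le> 2*B" by linarith
      thus "\<bar>b t p\<bar> \<le> \<bar>c\<bar> * (2*B)" unfolding b_def abs_mult
        by (intro mult_left_mono) auto
    qed
    have cD: "continuous_on ({0..T} \<times> UNIV) (\<lambda>(t,p). S t (p+h) - S t p)"
    proof -
      have c0: "continuous_on ({0..T} \<times> UNIV) (\<lambda>x. S (fst x) (snd x))"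
        using cont by (simp add: case_prod_beta')
      have c1: "continuous_on ({0..T} \<times> UNIV) (\<lambda>x. S (fst x) (snd x + h))"
      proof -
        let ?g = "\<lambda>x::real\<times>real. (fst x, snd x + h)"
        have g: "continuous_on ({0..T} \<times> UNIV) ?g" by (intro continuous_intros)
        have "?g ` ({0..T} \<times> UNIV) \<subseteq> {0..T} \<times> UNIV" by auto
        hence f: "continuous_on (?g ` ({0..T} \<times> UNIV)) (\<lambda>x. S (fst x) (snd x))"
          by (rule continuous_on_subset[OF c0])
        have "continuous_on ({0..T} \<times> UNIV) ((\<lambda>x. S (fst x) (snd x)) \<circ> ?g)"
          by (rule continuous_on_compose[OF g f])
        thus ?thesis by (simp add: o_def)
      qed
      show ?thesis using c0 c1 by (simp add: case_prod_beta' continuous_on_diff)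
    qed
    have cD': "continuous_on ({0..T} \<times> UNIV) (\<lambda>(t,p). S t p - S t (p+h))"
    proof -
      have "continuous_on ({0..T} \<times> UNIV) (\<lambda>x. - (case x of (t,p) \<Rightarrow> S t (p+h) - S t p))"
        using cD by (intro continuous_intros)
      thus ?thesis by (simp add: case_prod_beta')
    qed
    have dtD: "\<forall>t\<in>{0..<T}. \<forall>p. ((\<lambda>s. S s (p+h) - S s p) has_real_derivative St t (p+h) - St t p) (at t within {0..T})"
      using dt by (auto intro!: derivative_eq_intros)
    have dtD': "\<forall>t\<in>{0..<T}. \<forall>p. ((\<lambda>s. S s p - S s (p+h)) has_real_derivative St t p - St t (p+h)) (at t within {0..T})"
      using dt by (auto intro!: derivative_eq_intros)
    have sh: "((\<lambda>x. S t (x + h)) has_real_derivative Sp t (p+h)) (at p)" if "t \<in> {0..T}" for t p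
      using dp that DERIV_shift[of "S t" "Sp t (p+h)" p h] by (simp add: add.commute)
    have shp: "((\<lambda>x. Sp t (x + h)) has_real_derivative Spp t (p+h)) (at p)" if "t \<in> {0..<T}" for t p
      using dpp that DERIV_shift[of "Sp t" "Spp t (p+h)" p h] by (simp add: add.commute)
    have dpD: "\<forall>t\<in>{0..<T}. \<forall>p. ((\<lambda>x. S t (x+h) - S t x) has_real_derivative Sp t (p+h) - Sp t p) (at p)"
      using sh dp by (auto intro!: derivative_eq_intros)
    have dpD': "\<forall>t\<in>{0..<T}. \<forall>p. ((\<lambda>x. S t x - S t (x+h)) has_real_derivative Sp t p - Sp t (p+h)) (at p)"
      using sh dp by (auto intro!: derivative_eq_intros)
    have dppD: "\<forall>t\<in>{0..<T}. \<forall>p. ((\<lambda>x. Sp t (x+h) - Sp t x) has_real_derivative Spp t (p+h) - Spp t p) (at p)"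
      using shp dpp by (auto intro!: derivative_eq_intros)
    have dppD': "\<forall>t\<in>{0..<T}. \<forall>p. ((\<lambda>x. Sp t x - Sp t (x+h)) has_real_derivative Spp t p - Spp t (p+h)) (at p)"
      using shp dpp by (auto intro!: derivative_eq_intros)
    have eqD: "\<forall>t\<in>{0..<T}. \<forall>p. (St t (p+h) - St t p) + a * (Spp t (p+h) - Spp t p) + b t p * (Sp t (p+h) - Sp t p) = 0"
    proof (intro ballI allI)
      fix t p assume t: "t \<in> {0..<T}"
      have e1: "St t (p+h) + a * Spp t (p+h) + c * (Sp t (p+h))^2 = 0" using eq t by blast
      have e2: "St t p + a * Spp t p + c * (Sp t p)^2 = 0" using eq t by blast
      have "(St t (p+h) - St t p) + a * (Spp t (p+h) - Spp t p) + b t p * (Sp t (p+h) - Sp t p)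
          = (St t (p+h) + a * Spp t (p+h) + c * (Sp t (p+h))^2) - (St t p + a * Spp t p + c * (Sp t p)^2)"
        unfolding b_def by (simp add: algebra_simps power2_eq_square)
      thus "(St t (p+h) - St t p) + a * (Spp t (p+h) - Spp t p) + b t p * (Sp t (p+h) - Sp t p) = 0"
        using e1 e2 by simp
    qed
    have eqD': "\<forall>t\<in>{0..<T}. \<forall>p. (St t p - St t (p+h)) + a * (Spp t p - Spp t (p+h)) + b t p * (Sp t p - Sp t (p+h)) = 0"
    proof (intro ballI allI)
      fix t p assume t: "t \<in> {0..<T}"
      have E: "(St t (p+h) - St t p) + a * (Spp t (p+h) - Spp t p) + b t p * (Sp t (p+h) - Sp t p) = 0"
        using eqD t by blast
      have "(St t p - St t (p+h)) + a * (Spp t p - Spp t (p+h)) + b t p * (Sp t p - Sp t (p+h))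
        = - ((St t (p+h) - St t p) + a * (Spp t (p+h) - Spp t p) + b t p * (Sp t (p+h) - Sp t p))"
        by (simp add: algebra_simps)
      thus "(St t p - St t (p+h)) + a * (Spp t p - Spp t (p+h)) + b t p * (Sp t p - Sp t (p+h)) = 0"
        using E by simp
    qed
    have bD: "\<forall>t\<in>{0..T}. \<forall>p. S t (p+h) - S t p \<le> 2*B"
    proof (intro ballI allI)
      fix t p assume "t \<in> {0..T}"
      hence "\<bar>S t (p+h)\<bar> \<le> B" "\<bar>S t p\<bar> \<le> B" using bnd by auto
      thus "S t (p+h) - S t p \<le> 2*B" by (simp add: abs_le_iff)
    qed
    have bD': "\<forall>t\<in>{0..T}. \<forall>p. S t p - S t (p+h) \<le> 2*B"
    proof (intro ballI allI)
      fix t p assume "t \<in> {0..T}"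
      hence "\<bar>S t (p+h)\<bar> \<le> B" "\<bar>S t p\<bar> \<le> B" using bnd by auto
      thus "S t p - S t (p+h) \<le> 2*B" by (simp add: abs_le_iff)
    qed
    have tD: "\<forall>p. S T (p+h) - S T p \<le> L*\<bar>h\<bar>"
    proof
      fix p have "\<bar>S T (p+h) - S T p\<bar> \<le> L*\<bar>p+h-p\<bar>" using termc by blast
      thus "S T (p+h) - S T p \<le> L*\<bar>h\<bar>" by (simp add: abs_le_iff)
    qed
    have tD': "\<forall>p. S T p - S T (p+h) \<le> L*\<bar>h\<bar>"
    proof
      fix p have "\<bar>S T (p+h) - S T p\<bar> \<le> L*\<bar>p+h-p\<bar>" using termc by blast
      thus "S T p - S T (p+h) \<le> L*\<bar>h\<bar>" by (simp add: abs_le_iff)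
    qed
    have r1: "\<forall>t\<in>{0..T}. \<forall>p. S t (p+h) - S t p \<le> L*\<bar>h\<bar>"
      by (rule max_principle[where D="\<lambda>t p. S t (p+h) - S t p", OF T a cD bD dtD dpD dppD eqD bb tD])
    have r2: "\<forall>t\<in>{0..T}. \<forall>p. S t p - S t (p+h) \<le> L*\<bar>h\<bar>"
      by (rule max_principle[where D="\<lambda>t p. S t p - S t (p+h)", OF T a cD' bD' dtD' dpD' dppD' eqD' bb tD'])
    have "S t (p+h) - S t p \<le> L*\<bar>h\<bar>" "S t p - S t (p+h) \<le> L*\<bar>h\<bar>" using r1 r2 t by auto
    thus ?thesis by (simp add: abs_le_iff)
  qed
  show ?thesis
  proof (intro ballI allI)
    fix t p assume t: "t \<in> {0..T}"
    have lim: "((\<lambda>h. (S t (p+h) - S t p)/h) \<longlongrightarrow> Sp t p) (at 0)"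
      using dp t unfolding DERIV_def by blast
    hence lim2: "((\<lambda>h. \<bar>(S t (p+h) - S t p)/h\<bar>) \<longlongrightarrow> \<bar>Sp t p\<bar>) (at 0)"
      by (rule tendsto_rabs)
    have L0: "L \<ge> 0" using lip[OF t, of p 1] abs_ge_zero[of "S t (p+1) - S t p"] by linarith
    have all: "\<bar>(S t (p+h) - S t p)/h\<bar> \<le> L" for h
    proof (cases "h = 0")
      case True thus ?thesis using L0 by simp
    next
      case False
      hence h: "\<bar>h\<bar> > 0" by simp
      have "\<bar>(S t (p+h) - S t p)/h\<bar> = \<bar>S t (p+h) - S t p\<bar> / \<bar>h\<bar>" by (simp add: abs_divide)
      also have "\<dots> \<le> L * \<bar>h\<bar> / \<bar>h\<bar>" using lip[OF t] h by (intro divide_right_mono) auto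
      also have "\<dots> = L" using h by simp
      finally show ?thesis .
    qed
    have ev: "\<forall>\<^sub>F h in at (0::real). \<bar>(S t (p+h) - S t p)/h\<bar> \<le> L"
      using all by (intro always_eventually) blast
    show "\<bar>Sp t p\<bar> \<le> L"
      by (rule tendsto_upperbound[OF lim2 ev]) simp
  qed
qed


theorem mainTheorem6:
  fixes T sig lam kap :: real
    and H1 :: "real \<Rightarrow> real"
    and v vt vp vpp :: "nat \<Rightarrow> nat \<Rightarrow> real \<Rightarrow> real \<Rightarrow> real"
  assumes "T > 0" "sig > 0" "lam > 0" "kap > 0"
    and "C2b H1" and "H1 \<noteq> (\<lambda>p. 0)"
    and "\<And>N. N \<ge> 1 \<Longrightarrow>
           classical_solution T sig lam kap N (\<lambda>j. if j = 1 then H1 else (\<lambda>p. 0))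
             (v N) (vt N) (vp N) (vpp N)"
    and "t \<in> {0..T}"
  shows "(\<lambda>N. aggr_speed lam kap N (vp N) t p) \<longlonglongrightarrow> 0"
proof -
  obtain H' H'' B0 where dH: "\<forall>p. (H1 has_real_derivative H' p) (at p)"
    and bH: "\<forall>p. \<bar>H1 p\<bar> \<le> B0 \<and> \<bar>H' p\<bar> \<le> B0"
    using assms(5) unfolding C2b_def by blast
  have lipH: "\<bar>H1 x - H1 y\<bar> \<le> B0 * \<bar>x - y\<bar>" for x y
  proof -
    have one: "\<bar>H1 b - H1 a\<bar> \<le> B0 * \<bar>b - a\<bar>" if ab: "a < b" for a b
    proof -
      obtain z where z: "H1 b - H1 a = (b - a) * H' z"
        using MVT2[OF ab, of H1 H'] dH by blast
      have "\<bar>H1 b - H1 a\<bar> = \<bar>b - a\<bar> * \<bar>H' z\<bar>" using z by (simp add: abs_mult)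
      also have "\<dots> \<le> \<bar>b - a\<bar> * B0" using bH by (intro mult_left_mono) auto
      finally show ?thesis by (simp add: mult.commute)
    qed
    show ?thesis
    proof (cases x y rule: linorder_cases)
      case less thus ?thesis using one[OF less] by (simp add: abs_minus_commute)
    next
      case equal thus ?thesis by simp
    next
      case greater thus ?thesis using one[OF greater] by simp
    qed
  qed
  have bound: "\<bar>\<Sum>i\<in>{1..N}. vp N i t p\<bar> \<le> B0" if N: "N \<ge> 1" for N
  proof -
    have cs: "\<forall>j\<in>{1..N}.
      (\<forall>t\<in>{0..<T}. \<forall>p. ((\<lambda>s. v N j s p) has_real_derivative vt N j t p) (at t within {0..T})) \<and>
      (\<forall>t\<in>{0..T}. \<forall>p. (v N j t has_real_derivative vp N j t p) (at p)) \<and>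
      (\<forall>t\<in>{0..T}. \<forall>p. (vp N j t has_real_derivative vpp N j t p) (at p)) \<and>
      continuous_on ({0..T} \<times> UNIV) (\<lambda>(t,p). v N j t p) \<and>
      continuous_on ({0..T} \<times> UNIV) (\<lambda>(t,p). vp N j t p) \<and>
      continuous_on ({0..T} \<times> UNIV) (\<lambda>(t,p). vpp N j t p) \<and>
      continuous_on ({0..<T} \<times> UNIV) (\<lambda>(t,p). vt N j t p) \<and>
      (\<exists>B. \<forall>t\<in>{0..T}. \<forall>p. \<bar>v N j t p\<bar> \<le> B \<and> \<bar>vp N j t p\<bar> \<le> B \<and> \<bar>vpp N j t p\<bar> \<le> B) \<and>
      (\<forall>p. v N j T p = (if j = 1 then H1 else (\<lambda>p. 0)) p) \<and>
      (\<forall>t\<in>{0..<T}. \<forall>p.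
         0 = vt N j t p + sig^2 / 2 * vpp N j t p
             + lam * aggr_speed lam kap N (vp N) t p * vp N j t p
             - kap * indiv_speed lam kap N (vp N) j t p * aggr_speed lam kap N (vp N) t p)"
      using assms(7)[OF N] unfolding classical_solution_def by blast
    define S where "S t p = (\<Sum>j\<in>{1..N}. v N j t p)" for t p
    define St where "St t p = (\<Sum>j\<in>{1..N}. vt N j t p)" for t p
    define Sp where "Sp t p = (\<Sum>j\<in>{1..N}. vp N j t p)" for t p
    define Spp where "Spp t p = (\<Sum>j\<in>{1..N}. vpp N j t p)" for t p
    have cont: "continuous_on ({0..T} \<times> UNIV) (\<lambda>(t,p). S t p)"
    proof -
      have "\<forall>j\<in>{1..N}. continuous_on ({0..T} \<times> UNIV) (\<lambda>x. v N j (fst x) (snd x))"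
        using cs by (simp add: case_prod_beta')
      hence "continuous_on ({0..T} \<times> UNIV) (\<lambda>x. \<Sum>j\<in>{1..N}. v N j (fst x) (snd x))"
        by (intro continuous_on_sum) auto
      thus ?thesis unfolding S_def by (simp add: case_prod_beta')
    qed
    have "\<forall>j\<in>{1..N}. \<exists>B. \<forall>t\<in>{0..T}. \<forall>p. \<bar>v N j t p\<bar> \<le> B \<and> \<bar>vp N j t p\<bar> \<le> B"
    proof (intro ballI)
      fix j assume j: "j \<in> {1..N}"
      obtain B where "\<forall>t\<in>{0..T}. \<forall>p. \<bar>v N j t p\<bar> \<le> B \<and> \<bar>vp N j t p\<bar> \<le> B \<and> \<bar>vpp N j t p\<bar> \<le> B"
        using cs j by blast
      thus "\<exists>B. \<forall>t\<in>{0..T}. \<forall>p. \<bar>v N j t p\<bar> \<le> B \<and> \<bar>vp N j t p\<bar> \<le> B" by blast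
    qed
    then obtain Bf where Bf: "\<forall>j\<in>{1..N}. \<forall>t\<in>{0..T}. \<forall>p. \<bar>v N j t p\<bar> \<le> Bf j \<and> \<bar>vp N j t p\<bar> \<le> Bf j"
      by metis
    have bnd: "\<forall>t\<in>{0..T}. \<forall>p. \<bar>S t p\<bar> \<le> (\<Sum>j\<in>{1..N}. Bf j) \<and> \<bar>Sp t p\<bar> \<le> (\<Sum>j\<in>{1..N}. Bf j)"
    proof (intro ballI allI conjI)
      fix t p assume t: "t \<in> {0..T}"
      have "\<bar>S t p\<bar> \<le> (\<Sum>j\<in>{1..N}. \<bar>v N j t p\<bar>)" unfolding S_def by (rule sum_abs)
      also have "\<dots> \<le> (\<Sum>j\<in>{1..N}. Bf j)" using Bf t by (intro sum_mono) auto
      finally show "\<bar>S t p\<bar> \<le> (\<Sum>j\<in>{1..N}. Bf j)" .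
      have "\<bar>Sp t p\<bar> \<le> (\<Sum>j\<in>{1..N}. \<bar>vp N j t p\<bar>)" unfolding Sp_def by (rule sum_abs)
      also have "\<dots> \<le> (\<Sum>j\<in>{1..N}. Bf j)" using Bf t by (intro sum_mono) auto
      finally show "\<bar>Sp t p\<bar> \<le> (\<Sum>j\<in>{1..N}. Bf j)" .
    qed
    have dt: "\<forall>t\<in>{0..<T}. \<forall>p. ((\<lambda>s. S s p) has_real_derivative St t p) (at t within {0..T})"
      unfolding S_def St_def using cs by (auto intro!: DERIV_sum)
    have dp: "\<forall>t\<in>{0..T}. \<forall>p. (S t has_real_derivative Sp t p) (at p)"
    proof (intro ballI allI)
      fix t p assume "t \<in> {0..T}"
      hence "((\<lambda>x. \<Sum>j\<in>{1..N}. v N j t x) has_real_derivative Sp t p) (at p)"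
        unfolding Sp_def using cs by (auto intro!: DERIV_sum)
      thus "(S t has_real_derivative Sp t p) (at p)" unfolding S_def[abs_def] by simp
    qed
    have dpp: "\<forall>t\<in>{0..<T}. \<forall>p. (Sp t has_real_derivative Spp t p) (at p)"
    proof (intro ballI allI)
      fix t p assume "t \<in> {0..<T}"
      hence "((\<lambda>x. \<Sum>j\<in>{1..N}. vp N j t x) has_real_derivative Spp t p) (at p)"
        unfolding Spp_def using cs by (auto intro!: DERIV_sum)
      thus "(Sp t has_real_derivative Spp t p) (at p)" unfolding Sp_def[abs_def] by simp
    qed
    define q where "q = lam / (kap * (real N + 1))"
    define r where "r = lam / kap * (1 - real N * (1 / (real N + 1)))"
    define c where "c = lam * q - kap * r * q"
    have eq: "\<forall>t\<in>{0..<T}. \<forall>p. St t p + sig^2/2 * Spp t p + c * (Sp t p)^2 = 0"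
    proof (intro ballI allI)
      fix t p assume t: "t \<in> {0..<T}"
      define A where "A = aggr_speed lam kap N (vp N) t p"
      have A: "A = q * Sp t p" unfolding A_def aggr_speed_def q_def Sp_def by simp
      have I: "(\<Sum>j\<in>{1..N}. indiv_speed lam kap N (vp N) j t p) = r * Sp t p"
      proof -
        have "(\<Sum>j\<in>{1..N}. indiv_speed lam kap N (vp N) j t p)
            = lam / kap * (\<Sum>j\<in>{1..N}. vp N j t p - 1 / (real N + 1) * Sp t p)"
          unfolding indiv_speed_def Sp_def by (simp add: sum_distrib_left)
        also have "\<dots> = lam / kap * (Sp t p - real N * (1 / (real N + 1) * Sp t p))"
          by (simp add: sum_subtractf Sp_def)
        also have "\<dots> = r * Sp t p" unfolding r_def by (simp add: algebra_simps)
        finally show ?thesis .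
      qed
      have z: "(\<Sum>j\<in>{1..N}. vt N j t p + sig^2 / 2 * vpp N j t p
             + lam * A * vp N j t p - kap * indiv_speed lam kap N (vp N) j t p * A) = 0"
        using cs t unfolding A_def by (intro sum.neutral) auto
      have "(\<Sum>j\<in>{1..N}. vt N j t p + sig^2 / 2 * vpp N j t p
             + lam * A * vp N j t p - kap * indiv_speed lam kap N (vp N) j t p * A)
          = St t p + sig^2/2 * Spp t p + lam * A * Sp t p
             - kap * (\<Sum>j\<in>{1..N}. indiv_speed lam kap N (vp N) j t p) * A"
        unfolding St_def Spp_def Sp_def
        by (simp add: sum.distrib sum_subtractf sum_distrib_left sum_distrib_right)
      hence E: "St t p + sig^2/2 * Spp t p + lam * A * Sp t p - kap * (r * Sp t p) * A = 0"
        using z I by simp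
      have "lam * A * Sp t p - kap * (r * Sp t p) * A = c * (Sp t p)^2"
        unfolding A c_def by (simp add: algebra_simps power2_eq_square)
      thus "St t p + sig^2/2 * Spp t p + c * (Sp t p)^2 = 0" using E by simp
    qed
    have termc: "\<forall>x y. \<bar>S T x - S T y\<bar> \<le> B0 * \<bar>x - y\<bar>"
    proof -
      have "S T x = H1 x" for x
      proof -
        have "S T x = (\<Sum>j\<in>{1..N}. (if j = 1 then H1 x else 0))"
          unfolding S_def using cs by (intro sum.cong) auto
        also have "\<dots> = H1 x" using N by simp
        finally show ?thesis .
      qed
      thus ?thesis using lipH by simp
    qed
    have a: "sig^2/2 \<ge> 0" by simp
    have "\<forall>t\<in>{0..T}. \<forall>p. \<bar>Sp t p\<bar> \<le> B0"
      by (rule grad_bound[OF assms(1) a cont bnd dt dp dpp eq termc])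
    thus ?thesis using assms(8) unfolding Sp_def by blast
  qed
  show ?thesis
  proof (rule Lim_null_comparison)
    show "\<forall>\<^sub>F N in sequentially. norm (aggr_speed lam kap N (vp N) t p) \<le> lam / kap * B0 * inverse (real (Suc N))"
      unfolding eventually_sequentially
    proof (rule exI[of _ 1], intro allI impI)
      fix N :: nat assume N: "N \<ge> 1"
      have pos: "lam / (kap * (real N + 1)) > 0" using assms(3,4) by simp
      have "norm (aggr_speed lam kap N (vp N) t p) = lam / (kap * (real N + 1)) * \<bar>\<Sum>i\<in>{1..N}. vp N i t p\<bar>"
        unfolding aggr_speed_def using pos assms(3,4) by (simp add: abs_mult)
      also have "\<dots> \<le> lam / (kap * (real N + 1)) * B0" using bound[OF N] pos by (intro mult_left_mono) auto
      also have "\<dots> = lam / kap * B0 * inverse (real (Suc N))" by (simp add: field_simps)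
      finally show "norm (aggr_speed lam kap N (vp N) t p) \<le> lam / kap * B0 * inverse (real (Suc N))" .
    qed
    show "(\<lambda>N. lam / kap * B0 * inverse (real (Suc N))) \<longlonglongrightarrow> 0"
      using tendsto_mult[OF tendsto_const[of "lam / kap * B0"] LIMSEQ_inverse_real_of_nat] by simp
  qed
qed
end
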